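(* If $S\subseteq\mathbb{N}^{\mathbb{N}}$ is defined by a sentence $\phi$ of $\mathscr{L}_{\max}$ without nested quantifiers (that is, no quantifier appears in the scope of another quantifier), then $S$ is guessable.
   Context: A function $G:\mathbb{N}^{<\mathbb{N}}\to\{0,1\}$ ($\mathbb{N}^{<\mathbb{N}}$ = finite sequences of naturals) is a guesser for $S\subseteq\mathbb{N}^{\mathbb{N}}$ if for every $f:\mathbb{N}\to\mathbb{N}$ there is $m>0$ such that for all $n>m$, $G(f(0),\ldots,f(n))$ equals $1$ if $f\in S$ and $0$ if $f\notin S$; $S$ is guessable if it has a guesser. The language $\mathscr{L}_{\max}$ is a first-order language extended with ellipses: constant symbols $\mathbf{n}$ (also $\bar n$) for each $n\in\mathbb{N}$; an $n$-ary function symbol $\tilde w$ for each $w:\mathbb{N}^n\to\mathbb{N}$ ($n>0$); an $n$-ary predicate symbol $\tilde p$ for each $p\subseteq\mathbb{N}^n$ ($n>0$); an $\mathbb{N}^{<\mathbb{N}}$-ary function symbol $\tilde G$ for each $G:\mathbb{N}^{<\mathbb{N}}\to\mathbb{N}$ (applicable to any finite number of arguments); a unary function symbol $\mathbf{f}$; and a symbol $\cdots_x$ for each variable $x$. Besides the usual terms, for $\mathbb{N}^{<\mathbb{N}}$-ary $G$, terms $u,v$ and variable $x$, $G(u(\mathbf{0}),\cdots_x,u(v))$ is a term with free variables $(FV(u)\setminus\{x\})\cup FV(v)$. Formulas are built as usual. For $f:\mathbb{N}\to\mathbb{N}$, $\mathscr{M}_f$ is the structure on $\mathbb{N}$ interpreting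 every symbol as the object it names and $\mathbf{f}$ as $f$; terms are evaluated as usual, plus $G(u(\mathbf{0}),\cdots_x,u(v))^{s}=G\big(u(x|\mathbf{0})^{s},\ldots,u(x|\overline{v^{s}})^{s}\big)$ under an assignment $s$, where $u(x|c)$ is substitution of the constant $c$ for $x$ in $u$. A sentence $\phi$ defines $S\subseteq\mathbb{N}^{\mathbb{N}}$ if for every $f:\mathbb{N}\to\mathbb{N}$, $\mathscr{M}_f\models\phi$ iff $f\in S$. *)

theory Defs
  imports Main
begin

text \<open>An n-ary function symbol (n>0) for w : N^n -> N is represented by a function
  on lists applied to a list of n argument terms; likewise for predicate symbols.
  An N^{<N}-ary function symbol G is applied to any finite list of terms.\<close>

datatype trm =
    Var nat
  | Cst nat
  | Fn "nat list \<Rightarrow> nat" "trm list"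
  | GFn "nat list \<Rightarrow> nat" "trm list"
  | F trm
  | Ell "nat list \<Rightarrow> nat" trm nat trm        \<comment> \<open>Ell G u x v  =  G(u(0), ..._x, u(v))\<close>

datatype fm =
    Eq trm trm
  | Pred "nat list \<Rightarrow> bool" "trm list"
  | Neg fm
  | Conj fm fm
  | Disj fm fm
  | Imp fm fm
  | Iff fm fm
  | All nat fm
  | Ex nat fm

primrec wf_trm :: "trm \<Rightarrow> bool" where
  "wf_trm (Var x) = True"
| "wf_trm (Cst n) = True"
| "wf_trm (Fn w ts) = (ts \<noteq> [] \<and> list_all wf_trm ts)"
| "wf_trm (GFn g ts) = list_all wf_trm ts"
| "wf_trm (F t) = wf_trm t"
| "wf_trm (Ell g u x v) = (wf_trm u \<and> wf_trm v)"

primrec wf_fm :: "fm \<Rightarrow> bool" where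
  "wf_fm (Eq t1 t2) = (wf_trm t1 \<and> wf_trm t2)"
| "wf_fm (Pred p ts) = (ts \<noteq> [] \<and> list_all wf_trm ts)"
| "wf_fm (Neg \<phi>) = wf_fm \<phi>"
| "wf_fm (Conj \<phi> \<psi>) = (wf_fm \<phi> \<and> wf_fm \<psi>)"
| "wf_fm (Disj \<phi> \<psi>) = (wf_fm \<phi> \<and> wf_fm \<psi>)"
| "wf_fm (Imp \<phi> \<psi>) = (wf_fm \<phi> \<and> wf_fm \<psi>)"
| "wf_fm (Iff \<phi> \<psi>) = (wf_fm \<phi> \<and> wf_fm \<psi>)"
| "wf_fm (All x \<phi>) = wf_fm \<phi>"
| "wf_fm (Ex x \<phi>) = wf_fm \<phi>"

primrec FV_trm :: "trm \<Rightarrow> nat set" where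
  "FV_trm (Var x) = {x}"
| "FV_trm (Cst n) = {}"
| "FV_trm (Fn w ts) = \<Union> (set (map FV_trm ts))"
| "FV_trm (GFn g ts) = \<Union> (set (map FV_trm ts))"
| "FV_trm (F t) = FV_trm t"
| "FV_trm (Ell g u x v) = (FV_trm u - {x}) \<union> FV_trm v"

primrec FV_fm :: "fm \<Rightarrow> nat set" where
  "FV_fm (Eq t1 t2) = FV_trm t1 \<union> FV_trm t2"
| "FV_fm (Pred p ts) = \<Union> (set (map FV_trm ts))"
| "FV_fm (Neg \<phi>) = FV_fm \<phi>"
| "FV_fm (Conj \<phi> \<psi>) = FV_fm \<phi> \<union> FV_fm \<psi>"
| "FV_fm (Disj \<phi> \<psi>) = FV_fm \<phi> \<union> FV_fm \<psi>"
| "FV_fm (Imp \<phi> \<psi>) = FV_fm \<phi> \<union> FV_fm \<psi>"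
| "FV_fm (Iff \<phi> \<psi>) = FV_fm \<phi> \<union> FV_fm \<psi>"
| "FV_fm (All x \<phi>) = FV_fm \<phi> - {x}"
| "FV_fm (Ex x \<phi>) = FV_fm \<phi> - {x}"

definition sentence :: "fm \<Rightarrow> bool" where
  "sentence \<phi> \<longleftrightarrow> wf_fm \<phi> \<and> FV_fm \<phi> = {}"

primrec qdepth :: "fm \<Rightarrow> nat" where
  "qdepth (Eq t1 t2) = 0"
| "qdepth (Pred p ts) = 0"
| "qdepth (Neg \<phi>) = qdepth \<phi>"
| "qdepth (Conj \<phi> \<psi>) = max (qdepth \<phi>) (qdepth \<psi>)"
| "qdepth (Disj \<phi> \<psi>) = max (qdepth \<phi>) (qdepth \<psi>)"
| "qdepth (Imp \<phi> \<psi>) = max (qdepth \<phi>) (qdepth \<psi>)"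
| "qdepth (Iff \<phi> \<psi>) = max (qdepth \<phi>) (qdepth \<psi>)"
| "qdepth (All x \<phi>) = Suc (qdepth \<phi>)"
| "qdepth (Ex x \<phi>) = Suc (qdepth \<phi>)"

definition no_nested_quantifiers :: "fm \<Rightarrow> bool" where
  "no_nested_quantifiers \<phi> \<longleftrightarrow> qdepth \<phi> \<le> 1"

text \<open>Semantics in M_f under assignment s. The ellipsis term is evaluated as
  G(u^{s[x:=0]}, ..., u^{s[x:=v^s]}), which is the value of u(x|i)^s.\<close>
primrec eval :: "(nat \<Rightarrow> nat) \<Rightarrow> (nat \<Rightarrow> nat) \<Rightarrow> trm \<Rightarrow> nat" where
  "eval f s (Var x) = s x"
| "eval f s (Cst n) = n"
| "eval f s (Fn w ts) = w (map (eval f s) ts)"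
| "eval f s (GFn g ts) = g (map (eval f s) ts)"
| "eval f s (F t) = f (eval f s t)"
| "eval f s (Ell g u x v) = g (map (\<lambda>i. eval f (s(x := i)) u) [0..<Suc (eval f s v)])"

primrec sat :: "(nat \<Rightarrow> nat) \<Rightarrow> (nat \<Rightarrow> nat) \<Rightarrow> fm \<Rightarrow> bool" where
  "sat f s (Eq t1 t2) = (eval f s t1 = eval f s t2)"
| "sat f s (Pred p ts) = p (map (eval f s) ts)"
| "sat f s (Neg \<phi>) = (\<not> sat f s \<phi>)"
| "sat f s (Conj \<phi> \<psi>) = (sat f s \<phi> \<and> sat f s \<psi>)"
| "sat f s (Disj \<phi> \<psi>) = (sat f s \<phi> \<or> sat f s \<psi>)"
| "sat f s (Imp \<phi> \<psi>) = (sat f s \<phi> \<longrightarrow> sat f s \<psi>)"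
| "sat f s (Iff \<phi> \<psi>) = (sat f s \<phi> \<longleftrightarrow> sat f s \<psi>)"
| "sat f s (All x \<phi>) = (\<forall>n. sat f (s(x := n)) \<phi>)"
| "sat f s (Ex x \<phi>) = (\<exists>n. sat f (s(x := n)) \<phi>)"

text \<open>M_f |= phi for a sentence (value independent of the assignment).\<close>
definition models :: "(nat \<Rightarrow> nat) \<Rightarrow> fm \<Rightarrow> bool" where
  "models f \<phi> \<longleftrightarrow> (\<forall>s. sat f s \<phi>)"

definition defines_set :: "fm \<Rightarrow> (nat \<Rightarrow> nat) set \<Rightarrow> bool" where
  "defines_set \<phi> S \<longleftrightarrow> sentence \<phi> \<and> (\<forall>f. models f \<phi> \<longleftrightarrow> f \<in> S)"

text \<open>Guessers: outputs 0/1 represented as False/True; G(f(0),...,f(n)) = G (map f [0..<n+1]).\<close>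
definition guesser :: "(nat list \<Rightarrow> bool) \<Rightarrow> (nat \<Rightarrow> nat) set \<Rightarrow> bool" where
  "guesser G S \<longleftrightarrow> (\<forall>f. \<exists>m>0. \<forall>n>m. G (map f [0..<Suc n]) = (f \<in> S))"

definition guessable :: "(nat \<Rightarrow> nat) set \<Rightarrow> bool" where
  "guessable S \<longleftrightarrow> (\<exists>G. guesser G S)"

end

theory Submission
  imports Defs
begin

primrec use :: "(nat \<Rightarrow> nat) \<Rightarrow> (nat \<Rightarrow> nat) \<Rightarrow> trm \<Rightarrow> nat set" where
  "use f s (Var x) = {}"
| "use f s (Cst n) = {}"
| "use f s (Fn w ts) = \<Union> (set (map (use f s) ts))"
| "use f s (GFn g ts) = \<Union> (set (map (use f s) ts))"
| "use f s (F t) = use f s t \<union> {eval f s t}"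
| "use f s (Ell g u x v) = use f s v \<union> (\<Union>i\<in>{..eval f s v}. use f (s(x := i)) u)"

lemma use_finite: "finite (use f s t)"
  by (induction t arbitrary: s) auto

lemma use_agree:
  "(\<forall>k\<in>use f s t. g k = f k) \<Longrightarrow> eval g s t = eval f s t \<and> use g s t = use f s t"
proof (induction t arbitrary: s)
  case (Fn w ts)
  then have "\<And>t. t \<in> set ts \<Longrightarrow> eval g s t = eval f s t \<and> use g s t = use f s t" by auto
  then show ?case by (simp cong: map_cong)
next
  case (GFn w ts)
  then have "\<And>t. t \<in> set ts \<Longrightarrow> eval g s t = eval f s t \<and> use g s t = use f s t" by auto
  then show ?case by (simp cong: map_cong)
next
  case (F t)
  then show ?case by auto
next
  case (Ell g' u x v)
  then have v: "eval g s v = eval f s v \<and> use g s v = use f s v" by auto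
  have u: "\<And>i. i \<le> eval f s v \<Longrightarrow> eval g (s(x:=i)) u = eval f (s(x:=i)) u \<and> use g (s(x:=i)) u = use f (s(x:=i)) u"
  proof -
    fix i assume "i \<le> eval f s v"
    then have "\<forall>k\<in>use f (s(x:=i)) u. g k = f k" using Ell.prems by auto
    then show "eval g (s(x:=i)) u = eval f (s(x:=i)) u \<and> use g (s(x:=i)) u = use f (s(x:=i)) u"
      using Ell.IH(1) by blast
  qed
  have m: "map (\<lambda>i. eval g (s(x := i)) u) [0..<Suc (eval g s v)] = map (\<lambda>i. eval f (s(x := i)) u) [0..<Suc (eval f s v)]"
    using u v by (auto intro: map_cong)
  have U: "(\<Union>i\<in>{..eval g s v}. use g (s(x := i)) u) = (\<Union>i\<in>{..eval f s v}. use f (s(x := i)) u)"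
    using u v by auto
  have e: "eval g s (Ell g' u x v) = eval f s (Ell g' u x v)" using m by (simp only: eval.simps)
  have "use g s (Ell g' u x v) = use f s (Ell g' u x v)" using U v by (simp only: use.simps)
  then show ?case using e by blast
qed auto

primrec usef :: "(nat \<Rightarrow> nat) \<Rightarrow> (nat \<Rightarrow> nat) \<Rightarrow> fm \<Rightarrow> nat set" where
  "usef f s (Eq t1 t2) = use f s t1 \<union> use f s t2"
| "usef f s (Pred p ts) = \<Union> (set (map (use f s) ts))"
| "usef f s (Neg \<phi>) = usef f s \<phi>"
| "usef f s (Conj \<phi> \<psi>) = usef f s \<phi> \<union> usef f s \<psi>"
| "usef f s (Disj \<phi> \<psi>) = usef f s \<phi> \<union> usef f s \<psi>"
| "usef f s (Imp \<phi> \<psi>) = usef f s \<phi> \<union> usef f s \<psi>"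
| "usef f s (Iff \<phi> \<psi>) = usef f s \<phi> \<union> usef f s \<psi>"
| "usef f s (All x \<phi>) = {}"
| "usef f s (Ex x \<phi>) = {}"

lemma usef_finite: "finite (usef f s \<phi>)"
  by (induction \<phi>) (auto simp: use_finite)

lemma usef_agree:
  "qdepth \<phi> = 0 \<Longrightarrow> (\<forall>k\<in>usef f s \<phi>. g k = f k) \<Longrightarrow> sat g s \<phi> = sat f s \<phi> \<and> usef g s \<phi> = usef f s \<phi>"
proof (induction \<phi>)
  case (Eq t1 t2)
  have a: "\<forall>k\<in>use f s t1. g k = f k" "\<forall>k\<in>use f s t2. g k = f k" using Eq.prems by simp_all
  show ?case using use_agree[OF a(1)] use_agree[OF a(2)] by simp
next
  case (Pred p ts)
  have "\<And>t. t \<in> set ts \<Longrightarrow> eval g s t = eval f s t \<and> use g s t = use f s t"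
  proof -
    fix t assume "t \<in> set ts"
    then have "\<forall>k\<in>use f s t. g k = f k" using Pred.prems by auto
    then show "eval g s t = eval f s t \<and> use g s t = use f s t" by (rule use_agree)
  qed
  then show ?case by (simp cong: map_cong)
next
  case (Neg \<phi>) then show ?case by simp
next
  case (Conj \<phi> \<psi>)
  then have "qdepth \<phi> = 0" "qdepth \<psi> = 0" "\<forall>k\<in>usef f s \<phi>. g k = f k" "\<forall>k\<in>usef f s \<psi>. g k = f k" by simp_all
  then have "sat g s \<phi> = sat f s \<phi> \<and> usef g s \<phi> = usef f s \<phi>" "sat g s \<psi> = sat f s \<psi> \<and> usef g s \<psi> = usef f s \<psi>"
    using Conj.IH by blast+
  then show ?case by simp
next
  case (Disj \<phi> \<psi>)
  then have "qdepth \<phi> = 0" "qdepth \<psi> = 0" "\<forall>k\<in>usef f s \<phi>. g k = f k" "\<forall>k\<in>usef f s \<psi>. g k = f k" by simp_all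
  then have "sat g s \<phi> = sat f s \<phi> \<and> usef g s \<phi> = usef f s \<phi>" "sat g s \<psi> = sat f s \<psi> \<and> usef g s \<psi> = usef f s \<psi>"
    using Disj.IH by blast+
  then show ?case by simp
next
  case (Imp \<phi> \<psi>)
  then have "qdepth \<phi> = 0" "qdepth \<psi> = 0" "\<forall>k\<in>usef f s \<phi>. g k = f k" "\<forall>k\<in>usef f s \<psi>. g k = f k" by simp_all
  then have "sat g s \<phi> = sat f s \<phi> \<and> usef g s \<phi> = usef f s \<phi>" "sat g s \<psi> = sat f s \<psi> \<and> usef g s \<psi> = usef f s \<psi>"
    using Imp.IH by blast+
  then show ?case by simp
next
  case (Iff \<phi> \<psi>)
  then have "qdepth \<phi> = 0" "qdepth \<psi> = 0" "\<forall>k\<in>usef f s \<phi>. g k = f k" "\<forall>k\<in>usef f s \<psi>. g k = f k" by simp_all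
  then have "sat g s \<phi> = sat f s \<phi> \<and> usef g s \<phi> = usef f s \<phi>" "sat g s \<psi> = sat f s \<psi> \<and> usef g s \<psi> = usef f s \<psi>"
    using Iff.IH by blast+
  then show ?case by simp
qed auto

definition ext :: "nat list \<Rightarrow> nat \<Rightarrow> nat" where
  "ext l k = (if k < length l then l ! k else 0)"

lemma ext_agree: "k < Suc n \<Longrightarrow> ext (map f [0..<Suc n]) k = f k"
  unfolding ext_def by (simp del: upt_Suc)

primrec guess :: "fm \<Rightarrow> (nat \<Rightarrow> nat) \<Rightarrow> nat list \<Rightarrow> bool" where
  "guess (Eq t1 t2) s l = sat (ext l) s (Eq t1 t2)"
| "guess (Pred p ts) s l = sat (ext l) s (Pred p ts)"
| "guess (Neg \<phi>) s l = (\<not> guess \<phi> s l)"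
| "guess (Conj \<phi> \<psi>) s l = (guess \<phi> s l \<and> guess \<psi> s l)"
| "guess (Disj \<phi> \<psi>) s l = (guess \<phi> s l \<or> guess \<psi> s l)"
| "guess (Imp \<phi> \<psi>) s l = (guess \<phi> s l \<longrightarrow> guess \<psi> s l)"
| "guess (Iff \<phi> \<psi>) s l = (guess \<phi> s l \<longleftrightarrow> guess \<psi> s l)"
| "guess (Ex x \<phi>) s l = (\<exists>i<length l. sat (ext l) (s(x:=i)) \<phi> \<and> usef (ext l) (s(x:=i)) \<phi> \<subseteq> {..<length l})"
| "guess (All x \<phi>) s l = (\<not> (\<exists>i<length l. \<not> sat (ext l) (s(x:=i)) \<phi> \<and> usef (ext l) (s(x:=i)) \<phi> \<subseteq> {..<length l}))"

lemma finite_bound: "finite (A::nat set) \<Longrightarrow> \<exists>m. \<forall>k\<in>A. k \<le> m"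
  using finite_nat_set_iff_bounded_le by blast

lemma qf_eventually:
  assumes "qdepth \<phi> = 0"
  shows "\<exists>m. \<forall>n>m. sat (ext (map f [0..<Suc n])) s \<phi> = sat f s \<phi>"
proof -
  obtain m where m: "\<forall>k\<in>usef f s \<phi>. k \<le> m" using finite_bound[OF usef_finite] by blast
  show ?thesis
  proof (intro exI allI impI)
    fix n assume "m < n"
    then have "\<forall>k\<in>usef f s \<phi>. ext (map f [0..<Suc n]) k = f k" using m ext_agree by fastforce
    then show "sat (ext (map f [0..<Suc n])) s \<phi> = sat f s \<phi>" using usef_agree assms by blast
  qed
qed

lemma ex_eventually:
  assumes "qdepth \<phi> = 0"
  shows "\<exists>m. \<forall>n>m. (\<exists>i<Suc n. P (sat (ext (map f [0..<Suc n])) (s(x:=i)) \<phi>) \<and> usef (ext (map f [0..<Suc n])) (s(x:=i)) \<phi> \<subseteq> {..<Suc n})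
      = (\<exists>i. P (sat f (s(x:=i)) \<phi>))"
proof (cases "\<exists>i. P (sat f (s(x:=i)) \<phi>)")
  case True
  then obtain i where i: "P (sat f (s(x:=i)) \<phi>)" by blast
  obtain m where m: "\<forall>k\<in>usef f (s(x:=i)) \<phi>. k \<le> m" using finite_bound[OF usef_finite] by blast
  show ?thesis
  proof (intro exI allI impI)
    fix n assume n: "max i m < n"
    let ?g = "ext (map f [0..<Suc n])"
    have "\<forall>k\<in>usef f (s(x:=i)) \<phi>. ?g k = f k"
    proof
      fix k assume "k \<in> usef f (s(x:=i)) \<phi>"
      then have "k < Suc n" using m n by force
      then show "?g k = f k" by (rule ext_agree)
    qed
    then have "sat ?g (s(x:=i)) \<phi> = sat f (s(x:=i)) \<phi> \<and> usef ?g (s(x:=i)) \<phi> = usef f (s(x:=i)) \<phi>"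
      using usef_agree assms by blast
    moreover have "usef f (s(x:=i)) \<phi> \<subseteq> {..<Suc n}" using m n by force
    ultimately have "P (sat ?g (s(x:=i)) \<phi>) \<and> usef ?g (s(x:=i)) \<phi> \<subseteq> {..<Suc n}"
      using i by simp
    moreover have "i < Suc n" using n by simp
    ultimately show "(\<exists>i<Suc n. P (sat ?g (s(x:=i)) \<phi>) \<and> usef ?g (s(x:=i)) \<phi> \<subseteq> {..<Suc n})
      = (\<exists>i. P (sat f (s(x:=i)) \<phi>))" using True by blast
  qed
next
  case False
  show ?thesis
  proof (intro exI allI impI)
    fix n :: nat
    let ?g = "ext (map f [0..<Suc n])"
    have "\<not> (\<exists>i<Suc n. P (sat ?g (s(x:=i)) \<phi>) \<and> usef ?g (s(x:=i)) \<phi> \<subseteq> {..<Suc n})"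
    proof
      assume "\<exists>i<Suc n. P (sat ?g (s(x:=i)) \<phi>) \<and> usef ?g (s(x:=i)) \<phi> \<subseteq> {..<Suc n}"
      then obtain i where i: "P (sat ?g (s(x:=i)) \<phi>)" "usef ?g (s(x:=i)) \<phi> \<subseteq> {..<Suc n}" by blast
      then have "\<forall>k\<in>usef ?g (s(x:=i)) \<phi>. f k = ?g k" using ext_agree[of _ n f] by auto
      then have "sat f (s(x:=i)) \<phi> = sat ?g (s(x:=i)) \<phi>" using usef_agree assms by blast
      then have "P (sat f (s(x:=i)) \<phi>)" using i(1) by simp
      then show False using False by blast
    qed
    then show "(\<exists>i<Suc n. P (sat ?g (s(x:=i)) \<phi>) \<and> usef ?g (s(x:=i)) \<phi> \<subseteq> {..<Suc n})
      = (\<exists>i. P (sat f (s(x:=i)) \<phi>))" using False by blast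
  qed
qed

lemma combine2:
  fixes A B :: "nat \<Rightarrow> bool"
  assumes "\<exists>m. \<forall>n>m. A n = a" "\<exists>m. \<forall>n>m. B n = b"
  shows "\<exists>m. \<forall>n>m. A n = a \<and> B n = b"
proof -
  obtain m1 m2 where "\<forall>n>m1. A n = a" "\<forall>n>m2. B n = b" using assms by blast
  note h = this
  show ?thesis
  proof (intro exI allI impI)
    fix n assume "max m1 m2 < n"
    then show "A n = a \<and> B n = b" using h by simp
  qed
qed

lemma guess_correct:
  "qdepth \<phi> \<le> 1 \<Longrightarrow> \<exists>m. \<forall>n>m. guess \<phi> s (map f [0..<Suc n]) = sat f s \<phi>"
proof (induction \<phi> arbitrary: s)
  case (Eq t1 t2)
  then show ?case using qf_eventually[of "Eq t1 t2" f s] by simp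
next
  case (Pred p ts)
  then show ?case using qf_eventually[of "Pred p ts" f s] by simp
next
  case (Neg \<phi>)
  then show ?case by auto
next
  case (Conj \<phi> \<psi>)
  then have "\<exists>m. \<forall>n>m. guess \<phi> s (map f [0..<Suc n]) = sat f s \<phi> \<and> guess \<psi> s (map f [0..<Suc n]) = sat f s \<psi>"
    by (intro combine2) auto
  then show ?case by auto
next
  case (Disj \<phi> \<psi>)
  then have "\<exists>m. \<forall>n>m. guess \<phi> s (map f [0..<Suc n]) = sat f s \<phi> \<and> guess \<psi> s (map f [0..<Suc n]) = sat f s \<psi>"
    by (intro combine2) auto
  then show ?case by auto
next
  case (Imp \<phi> \<psi>)
  then have "\<exists>m. \<forall>n>m. guess \<phi> s (map f [0..<Suc n]) = sat f s \<phi> \<and> guess \<psi> s (map f [0..<Suc n]) = sat f s \<psi>"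
    by (intro combine2) auto
  then show ?case by auto
next
  case (Iff \<phi> \<psi>)
  then have "\<exists>m. \<forall>n>m. guess \<phi> s (map f [0..<Suc n]) = sat f s \<phi> \<and> guess \<psi> s (map f [0..<Suc n]) = sat f s \<psi>"
    by (intro combine2) auto
  then show ?case by auto
next
  case (Ex x \<phi>)
  then have "qdepth \<phi> = 0" by simp
  from ex_eventually[OF this, of "\<lambda>b. b" f s x] show ?case by simp
next
  case (All x \<phi>)
  then have "qdepth \<phi> = 0" by simp
  from ex_eventually[OF this, of "\<lambda>b. \<not> b" f s x] obtain m where
    m: "\<forall>n>m. (\<exists>i<Suc n. \<not> sat (ext (map f [0..<Suc n])) (s(x:=i)) \<phi> \<and> usef (ext (map f [0..<Suc n])) (s(x:=i)) \<phi> \<subseteq> {..<Suc n})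
      = (\<exists>i. \<not> sat f (s(x:=i)) \<phi>)" by blast
  show ?case
  proof (intro exI allI impI)
    fix n assume "m < n"
    then have "(\<exists>i<Suc n. \<not> sat (ext (map f [0..<Suc n])) (s(x:=i)) \<phi> \<and> usef (ext (map f [0..<Suc n])) (s(x:=i)) \<phi> \<subseteq> {..<Suc n})
      = (\<exists>i. \<not> sat f (s(x:=i)) \<phi>)" using m by blast
    then show "guess (All x \<phi>) s (map f [0..<Suc n]) = sat f s (All x \<phi>)"
      by (simp only: guess.simps sat.simps length_map length_upt diff_zero) blast
  qed
qed

lemma eval_FV: "\<forall>y\<in>FV_trm t. s y = s' y \<Longrightarrow> eval f s t = eval f s' t"
proof (induction t arbitrary: s s')
  case (Fn w ts)
  then have "\<And>t. t \<in> set ts \<Longrightarrow> eval f s t = eval f s' t" by auto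
  then show ?case by (simp cong: map_cong)
next
  case (GFn w ts)
  then have "\<And>t. t \<in> set ts \<Longrightarrow> eval f s t = eval f s' t" by auto
  then show ?case by (simp cong: map_cong)
next
  case (Ell g u x v)
  then have v: "eval f s v = eval f s' v" by auto
  have "\<And>i. eval f (s(x:=i)) u = eval f (s'(x:=i)) u" using Ell by auto
  then show ?case using v by simp
next
  case (F t)
  then have "eval f s t = eval f s' t" by simp
  then show ?case by simp
qed auto

lemma sat_FV: "\<forall>y\<in>FV_fm \<phi>. s y = s' y \<Longrightarrow> sat f s \<phi> = sat f s' \<phi>"
proof (induction \<phi> arbitrary: s s')
  case (Eq t1 t2)
  then show ?case using eval_FV[of t1 s s' f] eval_FV[of t2 s s' f] by auto
next
  case (Pred p ts)
  then have "\<And>t. t \<in> set ts \<Longrightarrow> eval f s t = eval f s' t" using eval_FV by fastforce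
  then show ?case by (simp cong: map_cong)
next
  case (All x \<phi>)
  have "\<And>i. sat f (s(x:=i)) \<phi> = sat f (s'(x:=i)) \<phi>" using All by auto
  then show ?case by simp
next
  case (Ex x \<phi>)
  have "\<And>i. sat f (s(x:=i)) \<phi> = sat f (s'(x:=i)) \<phi>" using Ex by auto
  then show ?case by simp
next
  case (Neg \<phi>) then have "sat f s \<phi> = sat f s' \<phi>" by simp
  then show ?case by simp
next
  case (Conj \<phi> \<psi>) then have "sat f s \<phi> = sat f s' \<phi>" "sat f s \<psi> = sat f s' \<psi>" by simp_all
  then show ?case by simp
next
  case (Disj \<phi> \<psi>) then have "sat f s \<phi> = sat f s' \<phi>" "sat f s \<psi> = sat f s' \<psi>" by simp_all
  then show ?case by simp
next
  case (Imp \<phi> \<psi>) then have "sat f s \<phi> = sat f s' \<phi>" "sat f s \<psi> = sat f s' \<psi>" by simp_all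
  then show ?case by simp
next
  case (Iff \<phi> \<psi>) then have "sat f s \<phi> = sat f s' \<phi>" "sat f s \<psi> = sat f s' \<psi>" by simp_all
  then show ?case by simp
qed

theorem lemma4p10:
  fixes S :: "(nat \<Rightarrow> nat) set" and \<phi> :: fm
  assumes "defines_set \<phi> S"
    and "no_nested_quantifiers \<phi>"
  shows "guessable S"
proof -
  let ?s = "\<lambda>_::nat. 0::nat"
  have sent: "FV_fm \<phi> = {}" and def: "\<And>f. models f \<phi> \<longleftrightarrow> f \<in> S"
    using assms(1) unfolding defines_set_def sentence_def by auto
  have mod: "\<And>f. models f \<phi> \<longleftrightarrow> sat f ?s \<phi>"
    unfolding models_def using sat_FV[of \<phi>] sent by auto
  have "guesser (\<lambda>l. guess \<phi> ?s l) S"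
    unfolding guesser_def
  proof
    fix f
    obtain m where "\<forall>n>m. guess \<phi> ?s (map f [0..<Suc n]) = sat f ?s \<phi>"
      using guess_correct assms(2) unfolding no_nested_quantifiers_def by blast
    then show "\<exists>m>0. \<forall>n>m. guess \<phi> ?s (map f [0..<Suc n]) = (f \<in> S)"
      using def mod by (intro exI[of _ "Suc m"]) auto
  qed
  then show ?thesis unfolding guessable_def by blast
qed

end
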